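(* If $A\in\widehat{\Omega}[0,1]$, then $x\mapsto\int_0^1A(s)\,dx(s)$ (Riemann–Stieltjes integral) defines a continuous linear functional on $CBV[0,1]$.
   Context: $CBV[0,1]$ denotes the Banach space of continuous real functions of bounded Jordan variation on $[0,1]$ with norm $\|x\|_{BV}=|x(0)|+\operatorname{var}_{[0,1]}x$. For $\varepsilon>0$ and $a<b$, a bounded $A\colon[a,b]\to\mathbb R$ belongs to $\Omega_\varepsilon[a,b]$ if there exists $\delta>0$ such that $\sup_{t\le\tau\le\sigma\le s}|A(\sigma)-A(\tau)|\le\varepsilon$ whenever $t,s\in[a,b]$ and $0\le s-t\le\delta$. $\Omega[0,1]$ is the set of bounded $A\colon[0,1]\to\mathbb R$ such that for every $\varepsilon>0$ there is $a\in(0,1)$ with $A|_{[0,a]}\in\Omega_\varepsilon[0,a]$ and $A|_{[a,1]}$ of bounded variation on $[a,1]$. $\widehat{\Omega}[0,1]=\Omega[0,1]\cup C[0,1]\cup BV[0,1]$. *)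

theory Defs
  imports "HOL-Analysis.Analysis"
begin

definition is_partition :: "real \<Rightarrow> real \<Rightarrow> nat \<Rightarrow> (nat \<Rightarrow> real) \<Rightarrow> bool" where
  "is_partition a b n t \<longleftrightarrow> t 0 = a \<and> t n = b \<and> (\<forall>i<n. t i < t (Suc i))"

definition variation_on :: "real \<Rightarrow> real \<Rightarrow> (real \<Rightarrow> real) \<Rightarrow> real" where
  "variation_on a b f =
     Sup {(\<Sum>i<n. \<bar>f (t (Suc i)) - f (t i)\<bar>) | n t. is_partition a b n t}"

definition bounded_variation_on :: "real \<Rightarrow> real \<Rightarrow> (real \<Rightarrow> real) \<Rightarrow> bool" where
  "bounded_variation_on a b f \<longleftrightarrow>
     bdd_above {(\<Sum>i<n. \<bar>f (t (Suc i)) - f (t i)\<bar>) | n t. is_partition a b n t}"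

definition CBV :: "(real \<Rightarrow> real) set" where
  "CBV = {x. continuous_on {0..1} x \<and> bounded_variation_on 0 1 x}"

definition BV_norm :: "(real \<Rightarrow> real) \<Rightarrow> real" where
  "BV_norm x = \<bar>x 0\<bar> + variation_on 0 1 x"

definition bounded_on :: "real \<Rightarrow> real \<Rightarrow> (real \<Rightarrow> real) \<Rightarrow> bool" where
  "bounded_on a b A \<longleftrightarrow> (\<exists>M. \<forall>u\<in>{a..b}. \<bar>A u\<bar> \<le> M)"

definition Omega_eps :: "real \<Rightarrow> real \<Rightarrow> real \<Rightarrow> (real \<Rightarrow> real) \<Rightarrow> bool" where
  "Omega_eps \<epsilon> a b A \<longleftrightarrow> bounded_on a b A \<and>
     (\<exists>\<delta>>0. \<forall>t s. t \<in> {a..b} \<longrightarrow> s \<in> {a..b} \<longrightarrow> 0 \<le> s - t \<longrightarrow> s - t \<le> \<delta> \<longrightarrow>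
        (\<forall>\<tau> \<sigma>. t \<le> \<tau> \<longrightarrow> \<tau> \<le> \<sigma> \<longrightarrow> \<sigma> \<le> s \<longrightarrow> \<bar>A \<sigma> - A \<tau>\<bar> \<le> \<epsilon>))"

definition Omega :: "(real \<Rightarrow> real) set" where
  "Omega = {A. bounded_on 0 1 A \<and>
     (\<forall>\<epsilon>>0. \<exists>a. 0 < a \<and> a < 1 \<and> Omega_eps \<epsilon> 0 a A \<and> bounded_variation_on a 1 A)}"

definition Omega_hat :: "(real \<Rightarrow> real) set" where
  "Omega_hat = Omega \<union> {A. continuous_on {0..1} A} \<union> {A. bounded_variation_on 0 1 A}"

definition has_RS_integral :: "(real \<Rightarrow> real) \<Rightarrow> (real \<Rightarrow> real) \<Rightarrow> real \<Rightarrow> bool" where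
  "has_RS_integral A x I \<longleftrightarrow>
     (\<forall>\<epsilon>>0. \<exists>\<delta>>0. \<forall>n t \<xi>. is_partition 0 1 n t \<longrightarrow>
        (\<forall>i<n. t (Suc i) - t i < \<delta>) \<longrightarrow>
        (\<forall>i<n. t i \<le> \<xi> i \<and> \<xi> i \<le> t (Suc i)) \<longrightarrow>
        \<bar>(\<Sum>i<n. A (\<xi> i) * (x (t (Suc i)) - x (t i))) - I\<bar> < \<epsilon>)"

end

theory Submission
  imports Defs
begin


definition RS :: "(real \<Rightarrow> real) \<Rightarrow> (real \<Rightarrow> real) \<Rightarrow> nat \<Rightarrow> (nat \<Rightarrow> real) \<Rightarrow> (nat \<Rightarrow> real) \<Rightarrow> real" where
  "RS f g n t \<xi> = (\<Sum>i<n. f (\<xi> i) * (g (t (Suc i)) - g (t i)))"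

definition wpart :: "nat \<Rightarrow> (nat \<Rightarrow> real) \<Rightarrow> bool" where
  "wpart n t \<longleftrightarrow> t 0 = 0 \<and> t n = 1 \<and> (\<forall>i<n. t i \<le> t (Suc i))"

lemma wpart_mono:
  assumes "\<forall>i<n. t i \<le> t (Suc i)" "i \<le> j" "j \<le> n"
  shows "t i \<le> (t j :: real)"
  using assms(2,3)
proof (induction j)
  case 0 thus ?case by simp
next
  case (Suc j)
  show ?case
  proof (cases "i = Suc j")
    case True thus ?thesis by simp
  next
    case False
    hence "i \<le> j" using Suc.prems by simp
    hence "t i \<le> t j" using Suc by simp
    also have "t j \<le> t (Suc j)" using assms(1) Suc.prems by simp
    finally show ?thesis .
  qed
qed

lemma wpart_range: assumes "wpart n t" "i \<le> n" shows "0 \<le> t i" "t i \<le> 1"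
  using wpart_mono[of n t 0 i] wpart_mono[of n t i n] assms unfolding wpart_def by auto

lemma clamp_sym:
  fixes g :: "real \<Rightarrow> real"
  assumes "a \<le> b" "c \<le> d"
  shows "g (max a (min b d)) - g (max a (min b c)) = g (max c (min d b)) - g (max c (min d a))"
proof -
  consider "d \<le> a" | "b \<le> c" | "a < d" "c < b" by linarith
  thus ?thesis
  proof cases
    case 1
    hence "max a (min b d) = a" "max a (min b c) = a"
          "max c (min d b) = d" "max c (min d a) = d" using assms by (auto simp: max_def min_def)
    thus ?thesis by simp
  next
    case 2
    hence "max a (min b d) = b" "max a (min b c) = b"
          "max c (min d b) = c" "max c (min d a) = c" using assms by (auto simp: max_def min_def)
    thus ?thesis by simp
  next
    case 3
    hence "max a (min b d) = min b d" "max a (min b c) = max a c"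
          "max c (min d b) = min b d" "max c (min d a) = max a c" using assms by (auto simp: max_def min_def)
    thus ?thesis by simp
  qed
qed

lemma clamp_tel:
  fixes g :: "real \<Rightarrow> real"
  assumes "wpart m u" "0 \<le> a" "a \<le> b" "b \<le> 1"
  shows "(\<Sum>j<m. g (max a (min b (u (Suc j)))) - g (max a (min b (u j)))) = g b - g a"
proof -
  have "(\<Sum>j<m. g (max a (min b (u (Suc j)))) - g (max a (min b (u j)))) = g (max a (min b (u m))) - g (max a (min b (u 0)))"
    by (rule sum_lessThan_telescope)
  moreover have "max a (min b (u m)) = b" "max a (min b (u 0)) = a"
    using assms unfolding wpart_def by (auto simp: max_def min_def)
  ultimately show ?thesis by simp
qed

lemma core:
  fixes f g v :: "real \<Rightarrow> real"
  assumes P: "wpart n t" and Q: "wpart m u"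
    and tx: "\<forall>i<n. t i \<le> \<xi> i \<and> \<xi> i \<le> t (Suc i)"
    and ty: "\<forall>j<m. u j \<le> \<eta> j \<and> \<eta> j \<le> u (Suc j)"
    and mt: "\<forall>i<n. t (Suc i) - t i \<le> \<delta>"
    and mu: "\<forall>j<m. u (Suc j) - u j \<le> \<delta>"
    and hf: "\<forall>a b. 0 \<le> a \<longrightarrow> a \<le> 1 \<longrightarrow> 0 \<le> b \<longrightarrow> b \<le> 1 \<longrightarrow> \<bar>a - b\<bar> \<le> 2*\<delta> \<longrightarrow> \<bar>f a - f b\<bar> \<le> \<epsilon>"
    and hg: "\<forall>p q. 0 \<le> p \<longrightarrow> p \<le> q \<longrightarrow> q \<le> 1 \<longrightarrow> \<bar>g q - g p\<bar> \<le> v q - v p"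
  shows "\<bar>RS f g n t \<xi> - RS f g m u \<eta>\<bar> \<le> \<epsilon> * (v 1 - v 0)"
proof -
  define cl where "cl i s = max (t i) (min (t (Suc i)) s)" for i s
  define D where "D i j = g (cl i (u (Suc j))) - g (cl i (u j))" for i j
  define W where "W i j = v (cl i (u (Suc j))) - v (cl i (u j))" for i j
  have tr: "0 \<le> t i" "t i \<le> 1" if "i \<le> n" for i using wpart_range[OF P that] by auto
  have ur: "0 \<le> u j" "u j \<le> 1" if "j \<le> m" for j using wpart_range[OF Q that] by auto
  have tm: "t i \<le> t (Suc i)" if "i < n" for i using P that unfolding wpart_def by auto
  have um: "u j \<le> u (Suc j)" if "j < m" for j using Q that unfolding wpart_def by auto
  have "n \<noteq> 0"
  proof
    assume "n = 0" with P have "t 0 = 0" "t 0 = 1" by (auto simp: wpart_def)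
    thus False by simp
  qed
  hence "0 \<le> \<delta>" using mt tm[of 0] by force
  hence e0: "0 \<le> \<epsilon>" using hf[rule_format, of 0 0] by simp
  have rowD: "(\<Sum>j<m. D i j) = g (t (Suc i)) - g (t i)" if "i < n" for i
    unfolding D_def cl_def using clamp_tel[OF Q, where a="t i" and b="t (Suc i)" and g=g] tr[of i] tr[of "Suc i"] tm[OF that] that by simp
  have rowW: "(\<Sum>j<m. W i j) = v (t (Suc i)) - v (t i)" if "i < n" for i
    unfolding W_def cl_def using clamp_tel[OF Q, where a="t i" and b="t (Suc i)" and g=v] tr[of i] tr[of "Suc i"] tm[OF that] that by simp
  have colD: "(\<Sum>i<n. D i j) = g (u (Suc j)) - g (u j)" if "j < m" for j
  proof -
    have "(\<Sum>i<n. D i j) = (\<Sum>i<n. g (max (u j) (min (u (Suc j)) (t (Suc i)))) - g (max (u j) (min (u (Suc j)) (t i))))"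
    proof (rule sum.cong[OF refl])
      fix i assume "i \<in> {..<n}"
      thus "D i j = g (max (u j) (min (u (Suc j)) (t (Suc i)))) - g (max (u j) (min (u (Suc j)) (t i)))"
        unfolding D_def cl_def using clamp_sym[OF tm um[OF that], where g=g] by simp
    qed
    also have "\<dots> = g (u (Suc j)) - g (u j)"
      using clamp_tel[OF P, where a="u j" and b="u (Suc j)" and g=g] ur[of j] ur[of "Suc j"] um[OF that] that by simp
    finally show ?thesis .
  qed
  have S1: "RS f g n t \<xi> = (\<Sum>i<n. \<Sum>j<m. f (\<xi> i) * D i j)"
    unfolding RS_def sum_distrib_left[symmetric] by (rule sum.cong) (simp_all add: rowD)
  have S2: "RS f g m u \<eta> = (\<Sum>i<n. \<Sum>j<m. f (\<eta> j) * D i j)"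
  proof -
    have "RS f g m u \<eta> = (\<Sum>j<m. \<Sum>i<n. f (\<eta> j) * D i j)"
      unfolding RS_def sum_distrib_left[symmetric] by (rule sum.cong) (simp_all add: colD)
    also have "\<dots> = (\<Sum>i<n. \<Sum>j<m. f (\<eta> j) * D i j)" by (rule sum.swap)
    finally show ?thesis .
  qed
  have S: "RS f g n t \<xi> - RS f g m u \<eta> = (\<Sum>i<n. \<Sum>j<m. (f (\<xi> i) - f (\<eta> j)) * D i j)"
    unfolding S1 S2 by (simp add: sum_subtractf left_diff_distrib)
  have pt: "\<bar>(f (\<xi> i) - f (\<eta> j)) * D i j\<bar> \<le> \<epsilon> * W i j" if "i < n" "j < m" for i j
  proof -
    have c1: "0 \<le> cl i (u j)" "cl i (u j) \<le> cl i (u (Suc j))" "cl i (u (Suc j)) \<le> 1"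
      using tr[of i] tr[of "Suc i"] tm[OF that(1)] um[OF that(2)] that unfolding cl_def by (auto simp: max_def min_def)
    hence DW: "\<bar>D i j\<bar> \<le> W i j" unfolding D_def W_def using hg by auto
    show ?thesis
    proof (cases "D i j = 0")
      case True thus ?thesis using DW e0 by simp
    next
      case False
      have ov1: "t i < u (Suc j)"
      proof (rule ccontr)
        assume "\<not> ?thesis"
        hence "cl i (u (Suc j)) = t i" "cl i (u j) = t i" using um[OF that(2)] tm[OF that(1)] unfolding cl_def by (auto simp: max_def min_def)
        thus False using False unfolding D_def by simp
      qed
      have ov2: "u j < t (Suc i)"
      proof (rule ccontr)
        assume "\<not> ?thesis"
        hence "cl i (u (Suc j)) = t (Suc i)" "cl i (u j) = t (Suc i)" using um[OF that(2)] tm[OF that(1)] unfolding cl_def by (auto simp: max_def min_def)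
        thus False using False unfolding D_def by simp
      qed
      have a1: "t i \<le> \<xi> i" "\<xi> i \<le> t (Suc i)" using tx that by auto
      have a2: "u j \<le> \<eta> j" "\<eta> j \<le> u (Suc j)" using ty that by auto
      have a3: "t (Suc i) - t i \<le> \<delta>" "u (Suc j) - u j \<le> \<delta>" using mt mu that by auto
      have "\<bar>\<xi> i - \<eta> j\<bar> \<le> 2*\<delta>" using ov1 ov2 a1 a2 a3 by linarith
      moreover have "0 \<le> \<xi> i" "\<xi> i \<le> 1" "0 \<le> \<eta> j" "\<eta> j \<le> 1"
        using a1 a2 tr[of i] tr[of "Suc i"] ur[of j] ur[of "Suc j"] that by auto
      ultimately have "\<bar>f (\<xi> i) - f (\<eta> j)\<bar> \<le> \<epsilon>" using hf by blast
      thus ?thesis unfolding abs_mult using DW e0 by (intro mult_mono) auto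
    qed
  qed
  have "\<bar>RS f g n t \<xi> - RS f g m u \<eta>\<bar> \<le> (\<Sum>i<n. \<bar>\<Sum>j<m. (f (\<xi> i) - f (\<eta> j)) * D i j\<bar>)"
    unfolding S by (rule sum_abs)
  also have "\<dots> \<le> (\<Sum>i<n. \<Sum>j<m. \<bar>(f (\<xi> i) - f (\<eta> j)) * D i j\<bar>)"
    by (intro sum_mono sum_abs)
  also have "\<dots> \<le> (\<Sum>i<n. \<Sum>j<m. \<epsilon> * W i j)"
    by (intro sum_mono pt) auto
  also have "\<dots> = (\<Sum>i<n. \<epsilon> * (v (t (Suc i)) - v (t i)))"
    unfolding sum_distrib_left[symmetric] by (intro arg_cong[where f="(*) \<epsilon>"] sum.cong) (simp_all add: rowW)
  also have "\<dots> = \<epsilon> * (v 1 - v 0)"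
    unfolding sum_distrib_left[symmetric] using P sum_lessThan_telescope[of "\<lambda>i. v (t i)" n] by (simp add: wpart_def)
  finally show ?thesis .
qed



definition VS :: "real \<Rightarrow> real \<Rightarrow> (real \<Rightarrow> real) \<Rightarrow> real set" where
  "VS a b f = {(\<Sum>i<n. \<bar>f (t (Suc i)) - f (t i)\<bar>) | n t. is_partition a b n t}"

lemma part_ext:
  assumes "is_partition c p n t" "p < q"
  shows "is_partition c q (Suc n) (t(Suc n := q))"
    "(\<Sum>i<Suc n. \<bar>f ((t(Suc n := q)) (Suc i)) - f ((t(Suc n := q)) i)\<bar>)
      = (\<Sum>i<n. \<bar>f (t (Suc i)) - f (t i)\<bar>) + \<bar>f q - f p\<bar>"
proof -
  have a: "t 0 = c" "t n = p" "\<forall>i<n. t i < t (Suc i)" using assms(1) unfolding is_partition_def by auto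
  have "\<forall>i<Suc n. (t(Suc n := q)) i < (t(Suc n := q)) (Suc i)"
  proof (intro allI impI)
    fix i assume "i < Suc n"
    then consider "i < n" | "i = n" by linarith
    thus "(t(Suc n := q)) i < (t(Suc n := q)) (Suc i)"
    proof cases
      case 1 thus ?thesis using a by simp
    next
      case 2 thus ?thesis using a assms(2) by simp
    qed
  qed
  thus "is_partition c q (Suc n) (t(Suc n := q))"
    using a unfolding is_partition_def by simp
  have "(\<Sum>i<n. \<bar>f ((t(Suc n := q)) (Suc i)) - f ((t(Suc n := q)) i)\<bar>) = (\<Sum>i<n. \<bar>f (t (Suc i)) - f (t i)\<bar>)"
    by (rule sum.cong) auto
  thus "(\<Sum>i<Suc n. \<bar>f ((t(Suc n := q)) (Suc i)) - f ((t(Suc n := q)) i)\<bar>)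
      = (\<Sum>i<n. \<bar>f (t (Suc i)) - f (t i)\<bar>) + \<bar>f q - f p\<bar>"
    using assms unfolding is_partition_def by simp
qed

lemma VS_ne: "c \<le> s \<Longrightarrow> VS c s f \<noteq> {}"
proof -
  assume "c \<le> s"
  show ?thesis
  proof (cases "c = s")
    case True
    have "is_partition c s 0 (\<lambda>_. c)" using True by (simp add: is_partition_def)
    thus ?thesis unfolding VS_def by blast
  next
    case False
    have "is_partition c s 1 (\<lambda>i. if i = 0 then c else s)" using False \<open>c \<le> s\<close> by (simp add: is_partition_def)
    thus ?thesis unfolding VS_def by blast
  qed
qed

lemma VS_ext: "y \<in> VS c p f \<Longrightarrow> p < q \<Longrightarrow> y + \<bar>f q - f p\<bar> \<in> VS c q f"
proof -
  assume "y \<in> VS c p f" "p < q"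
  then obtain n t where nt: "is_partition c p n t" "y = (\<Sum>i<n. \<bar>f (t (Suc i)) - f (t i)\<bar>)"
    unfolding VS_def by blast
  have e: "y + \<bar>f q - f p\<bar> = (\<Sum>i<Suc n. \<bar>f ((t(Suc n := q)) (Suc i)) - f ((t(Suc n := q)) i)\<bar>)"
    using part_ext(2)[OF nt(1) \<open>p<q\<close>, where f=f] nt(2) by simp
  show ?thesis unfolding VS_def using part_ext(1)[OF nt(1) \<open>p<q\<close>] e by blast
qed

lemma VS_bdd:
  assumes "bounded_variation_on c d f" "c \<le> s" "s \<le> d"
  shows "bdd_above (VS c s f)"
proof (cases "s = d")
  case True thus ?thesis using assms unfolding bounded_variation_on_def VS_def by simp
next
  case False
  hence sd: "s < d" using assms by simp
  obtain B where B: "\<forall>y\<in>VS c d f. y \<le> B" using assms(1) unfolding bounded_variation_on_def VS_def bdd_above_def by blast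
  have "\<forall>y\<in>VS c s f. y \<le> B"
  proof
    fix y assume "y \<in> VS c s f"
    hence "y + \<bar>f d - f s\<bar> \<in> VS c d f" using VS_ext sd by blast
    hence "y + \<bar>f d - f s\<bar> \<le> B" using B by blast
    thus "y \<le> B" by simp
  qed
  thus ?thesis unfolding bdd_above_def by blast
qed

lemma variation_VS: "variation_on a b f = Sup (VS a b f)"
  unfolding variation_on_def VS_def ..

lemma bv_majorant:
  assumes "bounded_variation_on c d f"
  shows "\<forall>p q. c \<le> p \<longrightarrow> p \<le> q \<longrightarrow> q \<le> d \<longrightarrow> \<bar>f q - f p\<bar> \<le> variation_on c q f - variation_on c p f"
proof (intro allI impI)
  fix p q assume h: "c \<le> p" "p \<le> q" "q \<le> d"
  show "\<bar>f q - f p\<bar> \<le> variation_on c q f - variation_on c p f"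
  proof (cases "p = q")
    case True thus ?thesis by simp
  next
    case False
    hence pq: "p < q" using h by simp
    have bq: "bdd_above (VS c q f)" using VS_bdd[OF assms] h by simp
    have "Sup (VS c p f) \<le> Sup (VS c q f) - \<bar>f q - f p\<bar>"
    proof (rule cSup_least)
      show "VS c p f \<noteq> {}" using VS_ne h by simp
      fix y assume "y \<in> VS c p f"
      hence "y + \<bar>f q - f p\<bar> \<in> VS c q f" using VS_ext pq by blast
      hence "y + \<bar>f q - f p\<bar> \<le> Sup (VS c q f)" using cSup_upper bq by blast
      thus "y \<le> Sup (VS c q f) - \<bar>f q - f p\<bar>" by simp
    qed
    thus ?thesis unfolding variation_VS by simp
  qed
qed

definition spart :: "nat \<Rightarrow> (nat \<Rightarrow> real) \<Rightarrow> (nat \<Rightarrow> real) \<Rightarrow> real \<Rightarrow> bool" where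
  "spart n t \<xi> \<delta> \<longleftrightarrow> is_partition 0 1 n t \<and> (\<forall>i<n. t (Suc i) - t i < \<delta>) \<and> (\<forall>i<n. t i \<le> \<xi> i \<and> \<xi> i \<le> t (Suc i))"

lemma has_RS_alt: "has_RS_integral A x I \<longleftrightarrow>
  (\<forall>\<epsilon>>0. \<exists>\<delta>>0. \<forall>n t \<xi>. spart n t \<xi> \<delta> \<longrightarrow> \<bar>RS A x n t \<xi> - I\<bar> < \<epsilon>)"
  unfolding has_RS_integral_def spart_def RS_def by (simp only: imp_conjL)

lemma spart_wpart:
  assumes "spart n t \<xi> \<delta>"
  shows "wpart n t" "\<forall>i<n. t i \<le> \<xi> i \<and> \<xi> i \<le> t (Suc i)" "\<forall>i<n. t (Suc i) - t i \<le> \<delta>"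
  using assms unfolding spart_def wpart_def is_partition_def by (auto simp: less_imp_le)

lemma spart_range:
  assumes "spart n t \<xi> \<delta>" "i < n"
  shows "0 \<le> \<xi> i" "\<xi> i \<le> 1"
proof -
  have w: "wpart n t" using spart_wpart[OF assms(1)] by simp
  have "t i \<le> \<xi> i" "\<xi> i \<le> t (Suc i)" using spart_wpart(2)[OF assms(1)] assms(2) by auto
  thus "0 \<le> \<xi> i" "\<xi> i \<le> 1" using wpart_range[OF w, of i] wpart_range[OF w, of "Suc i"] assms(2) by auto
qed

lemma small_eventually:
  assumes "(\<delta>::real) > 0"
  shows "\<forall>\<^sub>F N in sequentially. 1 / real (Suc N) < \<delta>"
proof -
  obtain M :: nat where M: "1 / \<delta> < real M" using reals_Archimedean2 by blast
  show ?thesis unfolding eventually_sequentially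
  proof (intro exI allI impI)
    fix N assume "M \<le> N"
    hence "1 / \<delta> < real (Suc N)" using M by linarith
    thus "1 / real (Suc N) < \<delta>" using assms by (simp add: divide_simps mult.commute)
  qed
qed

lemma unif_spart:
  assumes "1 / real (Suc N) < \<delta>"
  shows "spart (Suc N) (\<lambda>i. real i / real (Suc N)) (\<lambda>i. real i / real (Suc N)) \<delta>"
proof -
  have "\<forall>i<Suc N. real (Suc i) / real (Suc N) - real i / real (Suc N) < \<delta>"
  proof (intro allI impI)
    fix i
    have "real (Suc i) / real (Suc N) - real i / real (Suc N) = 1 / real (Suc N)"
      by (simp add: diff_divide_distrib[symmetric])
    thus "i < Suc N \<Longrightarrow> real (Suc i) / real (Suc N) - real i / real (Suc N) < \<delta>" using assms by simp
  qed
  moreover have "\<forall>i<Suc N. real i / real (Suc N) < real (Suc i) / real (Suc N)"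
    by (simp add: divide_strict_right_mono)
  ultimately show ?thesis unfolding spart_def is_partition_def by (simp add: less_imp_le)
qed
lemma exists_spart: "\<delta> > 0 \<Longrightarrow> \<exists>n t \<xi>. spart n t \<xi> \<delta>"
proof -
  assume "\<delta> > 0"
  then obtain N where "1 / real (Suc N) < \<delta>" using small_eventually[of \<delta>] unfolding eventually_sequentially by blast
  thus ?thesis using unif_spart by blast
qed




definition cauchyRS :: "(real \<Rightarrow> real) \<Rightarrow> (real \<Rightarrow> real) \<Rightarrow> bool" where
  "cauchyRS A x \<longleftrightarrow> (\<forall>\<epsilon>>0. \<exists>\<delta>>0. \<forall>n t \<xi> m u \<eta>. spart n t \<xi> \<delta> \<longrightarrow> spart m u \<eta> \<delta> \<longrightarrow>
      \<bar>RS A x n t \<xi> - RS A x m u \<eta>\<bar> \<le> \<epsilon>)"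

lemma cauchy_conv:
  assumes C: "cauchyRS A x"
  shows "\<exists>I. has_RS_integral A x I"
proof -
  define s where "s N = RS A x (Suc N) (\<lambda>i. real i / real (Suc N)) (\<lambda>i. real i / real (Suc N))" for N
  have getd: "\<exists>\<delta>>0. \<forall>n t \<xi> m u \<eta>. spart n t \<xi> \<delta> \<longrightarrow> spart m u \<eta> \<delta> \<longrightarrow>
      \<bar>RS A x n t \<xi> - RS A x m u \<eta>\<bar> \<le> e/2" if "e > 0" for e
  proof -
    have "e/2 > 0" using that by simp
    show ?thesis by (rule C[unfolded cauchyRS_def, rule_format, OF \<open>e/2>0\<close>])
  qed
  have "Cauchy s"
  proof (rule metric_CauchyI)
    fix e :: real assume "e > 0"
    then obtain \<delta> where "\<delta> > 0" and H: "\<forall>n t \<xi> m u \<eta>. spart n t \<xi> \<delta> \<longrightarrow> spart m u \<eta> \<delta> \<longrightarrow>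
      \<bar>RS A x n t \<xi> - RS A x m u \<eta>\<bar> \<le> e/2"
      using getd by blast
    obtain M where M: "\<And>N. M \<le> N \<Longrightarrow> 1 / real (Suc N) < \<delta>"
      using small_eventually[OF \<open>\<delta>>0\<close>] unfolding eventually_sequentially by blast
    show "\<exists>M. \<forall>m\<ge>M. \<forall>n\<ge>M. dist (s m) (s n) < e"
    proof (intro exI allI impI)
      fix m n assume mn: "M \<le> m" "M \<le> n"
      have sm: "spart (Suc m) (\<lambda>i. real i / real (Suc m)) (\<lambda>i. real i / real (Suc m)) \<delta>"
        by (rule unif_spart, rule M, rule mn(1))
      have sn: "spart (Suc n) (\<lambda>i. real i / real (Suc n)) (\<lambda>i. real i / real (Suc n)) \<delta>"
        by (rule unif_spart, rule M, rule mn(2))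
      have "\<bar>s m - s n\<bar> \<le> e/2" unfolding s_def by (rule H[rule_format, OF sm sn])
      thus "dist (s m) (s n) < e" using \<open>e>0\<close> by (simp add: dist_real_def)
    qed
  qed
  then obtain I where I: "s \<longlonglongrightarrow> I" using Cauchy_convergent_iff convergent_def by blast
  have "has_RS_integral A x I" unfolding has_RS_alt
  proof (intro allI impI)
    fix e :: real assume "e > 0"
    then obtain \<delta> where "\<delta> > 0" and H: "\<forall>n t \<xi> m u \<eta>. spart n t \<xi> \<delta> \<longrightarrow> spart m u \<eta> \<delta> \<longrightarrow>
      \<bar>RS A x n t \<xi> - RS A x m u \<eta>\<bar> \<le> e/2"
      using getd by blast
    have "e/2 > 0" using \<open>e>0\<close> by simp
    have "\<forall>\<^sub>F N in sequentially. dist (s N) I < e/2" by (rule tendstoD[OF I \<open>e/2>0\<close>])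
    then have "\<forall>\<^sub>F N in sequentially. dist (s N) I < e/2 \<and> 1 / real (Suc N) < \<delta>"
      by (rule eventually_conj[OF _ small_eventually[OF \<open>\<delta>>0\<close>]])
    then obtain N where N: "dist (s N) I < e/2" "1 / real (Suc N) < \<delta>"
      unfolding eventually_sequentially by blast
    show "\<exists>\<delta>>0. \<forall>n t \<xi>. spart n t \<xi> \<delta> \<longrightarrow> \<bar>RS A x n t \<xi> - I\<bar> < e"
    proof (intro exI conjI allI impI)
      show "\<delta> > 0" by fact
      fix n t \<xi> assume sp: "spart n t \<xi> \<delta>"
      have "\<bar>RS A x n t \<xi> - s N\<bar> \<le> e/2" unfolding s_def by (rule H[rule_format, OF sp unif_spart[OF N(2)]])
      moreover have "\<bar>RS A x n t \<xi> - I\<bar> \<le> \<bar>RS A x n t \<xi> - s N\<bar> + \<bar>s N - I\<bar>" by linarith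
      ultimately show "\<bar>RS A x n t \<xi> - I\<bar> < e" using N(1) by (simp add: dist_real_def)
    qed
  qed
  thus ?thesis by blast
qed



lemma spart_mono: "spart n t \<xi> \<delta> \<Longrightarrow> \<delta> \<le> \<delta>' \<Longrightarrow> spart n t \<xi> \<delta>'"
  unfolding spart_def by force

lemma RS_add: "RS (\<lambda>s. f s + g s) x n t \<xi> = RS f x n t \<xi> + RS g x n t \<xi>"
  unfolding RS_def by (simp add: distrib_right sum.distrib)

lemma osc_pair:
  assumes hx: "\<forall>p q. 0 \<le> p \<longrightarrow> p \<le> q \<longrightarrow> q \<le> 1 \<longrightarrow> \<bar>x q - x p\<bar> \<le> v q - v p"
    and hf: "\<forall>a b. 0 \<le> a \<longrightarrow> a \<le> 1 \<longrightarrow> 0 \<le> b \<longrightarrow> b \<le> 1 \<longrightarrow> \<bar>a - b\<bar> \<le> 2*\<delta> \<longrightarrow> \<bar>A a - A b\<bar> \<le> e"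
    and P: "spart n t \<xi> \<delta>" and Q: "spart m u \<eta> \<delta>"
  shows "\<bar>RS A x n t \<xi> - RS A x m u \<eta>\<bar> \<le> e * (v 1 - v 0)"
  by (rule core[OF spart_wpart(1)[OF P] spart_wpart(1)[OF Q] spart_wpart(2)[OF P] spart_wpart(2)[OF Q]
        spart_wpart(3)[OF P] spart_wpart(3)[OF Q] hf hx])

lemma osc_cauchy:
  assumes hx: "\<forall>p q. 0 \<le> p \<longrightarrow> p \<le> q \<longrightarrow> q \<le> 1 \<longrightarrow> \<bar>x q - x p\<bar> \<le> v q - v p"
    and hA: "\<forall>\<epsilon>>0. \<exists>d>0. \<forall>a b. 0 \<le> a \<longrightarrow> a \<le> 1 \<longrightarrow> 0 \<le> b \<longrightarrow> b \<le> 1 \<longrightarrow> \<bar>a - b\<bar> \<le> d \<longrightarrow> \<bar>A a - A b\<bar> \<le> \<epsilon>"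
  shows "cauchyRS A x"
  unfolding cauchyRS_def
proof (intro allI impI)
  fix \<epsilon> :: real assume "\<epsilon> > 0"
  define V where "V = v 1 - v 0"
  have V0: "0 \<le> V" using hx[rule_format, of 0 1] unfolding V_def by simp
  define e where "e = \<epsilon> / (V + 1)"
  have e0: "e > 0" unfolding e_def using V0 \<open>\<epsilon>>0\<close> by simp
  have eV: "e * V \<le> \<epsilon>"
  proof -
    have "e * V \<le> e * (V + 1)" using e0 by simp
    also have "\<dots> = \<epsilon>" unfolding e_def using V0 by simp
    finally show ?thesis .
  qed
  obtain d where d: "d > 0" and hd: "\<forall>a b. 0 \<le> a \<longrightarrow> a \<le> 1 \<longrightarrow> 0 \<le> b \<longrightarrow> b \<le> 1 \<longrightarrow> \<bar>a - b\<bar> \<le> d \<longrightarrow> \<bar>A a - A b\<bar> \<le> e"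
    using hA e0 by blast
  have hf: "\<forall>a b. 0 \<le> a \<longrightarrow> a \<le> 1 \<longrightarrow> 0 \<le> b \<longrightarrow> b \<le> 1 \<longrightarrow> \<bar>a - b\<bar> \<le> 2*(d/2) \<longrightarrow> \<bar>A a - A b\<bar> \<le> e"
    using hd by simp
  show "\<exists>\<delta>>0. \<forall>n t \<xi> m u \<eta>. spart n t \<xi> \<delta> \<longrightarrow> spart m u \<eta> \<delta> \<longrightarrow> \<bar>RS A x n t \<xi> - RS A x m u \<eta>\<bar> \<le> \<epsilon>"
  proof (intro exI conjI allI impI)
    show "d/2 > 0" using d by simp
    fix n t \<xi> m u \<eta> assume P: "spart n t \<xi> (d/2)" and Q: "spart m u \<eta> (d/2)"
    have "\<bar>RS A x n t \<xi> - RS A x m u \<eta>\<bar> \<le> e * V" unfolding V_def by (rule osc_pair[OF hx hf P Q])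
    thus "\<bar>RS A x n t \<xi> - RS A x m u \<eta>\<bar> \<le> \<epsilon>" using eV by linarith
  qed
qed

lemma unif_osc:
  assumes "continuous_on {0..1} (f :: real \<Rightarrow> real)"
  shows "\<forall>\<epsilon>>0. \<exists>d>0. \<forall>a b. 0 \<le> a \<longrightarrow> a \<le> 1 \<longrightarrow> 0 \<le> b \<longrightarrow> b \<le> 1 \<longrightarrow> \<bar>a - b\<bar> \<le> d \<longrightarrow> \<bar>f a - f b\<bar> \<le> \<epsilon>"
proof (intro allI impI)
  fix \<epsilon> :: real assume "\<epsilon> > 0"
  have "uniformly_continuous_on {0..1} f" using assms compact_uniformly_continuous compact_Icc by blast
  then obtain d where "d > 0" and hd: "\<forall>x\<in>{0..1}. \<forall>x'\<in>{0..1}. dist x' x < d \<longrightarrow> dist (f x') (f x) < \<epsilon>"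
    unfolding uniformly_continuous_on_def using \<open>\<epsilon>>0\<close> by blast
  show "\<exists>d>0. \<forall>a b. 0 \<le> a \<longrightarrow> a \<le> 1 \<longrightarrow> 0 \<le> b \<longrightarrow> b \<le> 1 \<longrightarrow> \<bar>a - b\<bar> \<le> d \<longrightarrow> \<bar>f a - f b\<bar> \<le> \<epsilon>"
  proof (intro exI conjI allI impI)
    show "d/2 > 0" using \<open>d>0\<close> by simp
    fix a b :: real assume "0 \<le> a" "a \<le> 1" "0 \<le> b" "b \<le> 1" "\<bar>a - b\<bar> \<le> d/2"
    hence "dist a b < d" "a \<in> {0..1}" "b \<in> {0..1}" using \<open>d>0\<close> by (auto simp: dist_real_def)
    hence "dist (f a) (f b) < \<epsilon>" using hd by blast
    thus "\<bar>f a - f b\<bar> \<le> \<epsilon>" by (simp add: dist_real_def)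
  qed
qed

lemma case_cont:
  assumes hx: "\<forall>p q. 0 \<le> p \<longrightarrow> p \<le> q \<longrightarrow> q \<le> 1 \<longrightarrow> \<bar>x q - x p\<bar> \<le> v q - v p"
    and cA: "continuous_on {0..1} A"
  shows "cauchyRS A x"
  by (rule osc_cauchy[OF hx unif_osc[OF cA]])

lemma abel:
  fixes X B :: "nat \<Rightarrow> real"
  shows "(\<Sum>k<Suc n. X k * (B (Suc k) - B k)) = X n * B (Suc n) - X 0 * B 0 - (\<Sum>k<n. B (Suc k) * (X (Suc k) - X k))"
  by (induction n) (simp_all add: algebra_simps)

lemma byparts:
  assumes P: "spart n t \<xi> \<delta>"
  shows "\<exists>s. wpart (Suc n) s \<and> (\<forall>k<Suc n. s k \<le> t k \<and> t k \<le> s (Suc k)) \<and> (\<forall>k<Suc n. s (Suc k) - s k \<le> 2*\<delta>)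
     \<and> RS A x n t \<xi> = A 1 * x 1 - A 0 * x 0 - RS x A (Suc n) s t"
proof -
  have t0: "t 0 = 0" and tn: "t n = 1" and tm: "\<forall>i<n. t i < t (Suc i)" and mesh: "\<forall>i<n. t (Suc i) - t i < \<delta>"
    and tg: "\<forall>i<n. t i \<le> \<xi> i \<and> \<xi> i \<le> t (Suc i)"
    using P unfolding spart_def is_partition_def by auto
  have n0: "n \<noteq> 0"
  proof
    assume "n = 0" with t0 tn show False by simp
  qed
  define s where "s k = (if k = 0 then 0 else if k \<le> n then \<xi> (k - 1) else 1)" for k
  have sS: "s (Suc k) = \<xi> k" if "k < n" for k using that unfolding s_def by simp
  have pr: "s k \<le> t k \<and> t k \<le> s (Suc k) \<and> s (Suc k) - s k \<le> 2*\<delta>" if "k < Suc n" for k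
  proof (cases k)
    case 0
    have "s 0 = 0" "s (Suc 0) = \<xi> 0" using n0 unfolding s_def by auto
    moreover have "t 0 \<le> \<xi> 0" "\<xi> 0 \<le> t 1" "t 1 - t 0 < \<delta>" using tg mesh n0 by auto
    ultimately show ?thesis using 0 t0 by simp
  next
    case (Suc j)
    hence jn: "j < n" using that by simp
    have sk: "s k = \<xi> j" using Suc jn unfolding s_def by simp
    have a: "t j \<le> \<xi> j" "\<xi> j \<le> t (Suc j)" "t (Suc j) - t j < \<delta>" using tg mesh jn by auto
    show ?thesis
    proof (cases "Suc j < n")
      case True
      have "s (Suc k) = \<xi> (Suc j)" using Suc True unfolding s_def by simp
      moreover have "t (Suc j) \<le> \<xi> (Suc j)" "\<xi> (Suc j) \<le> t (Suc (Suc j))" "t (Suc (Suc j)) - t (Suc j) < \<delta>"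
        using tg mesh True by auto
      ultimately show ?thesis using sk a Suc by simp
    next
      case False
      hence "Suc j = n" using jn by simp
      moreover have "s (Suc k) = 1" using Suc False jn unfolding s_def by simp
      ultimately show ?thesis using sk a Suc tn by auto
    qed
  qed
  have "s 0 = 0" "s (Suc n) = 1" unfolding s_def by auto
  have w: "wpart (Suc n) s"
  proof -
    note \<open>s 0 = 0\<close> \<open>s (Suc n) = 1\<close>
    moreover have "\<forall>k<Suc n. s k \<le> s (Suc k)"
    proof (intro allI impI)
      fix k assume "k < Suc n"
      from pr[OF this] show "s k \<le> s (Suc k)" by linarith
    qed
    ultimately show ?thesis unfolding wpart_def by simp
  qed
  have "RS x A (Suc n) s t = x (t n) * A (s (Suc n)) - x (t 0) * A (s 0) - (\<Sum>k<n. A (s (Suc k)) * (x (t (Suc k)) - x (t k)))"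
    unfolding RS_def by (rule abel)
  also have "(\<Sum>k<n. A (s (Suc k)) * (x (t (Suc k)) - x (t k))) = RS A x n t \<xi>"
    unfolding RS_def by (rule sum.cong) (simp_all add: sS)
  finally have "RS A x n t \<xi> = A 1 * x 1 - A 0 * x 0 - RS x A (Suc n) s t"
    using t0 tn \<open>s 0 = 0\<close> \<open>s (Suc n) = 1\<close> by (simp add: algebra_simps)
  thus ?thesis using w pr by blast
qed

lemma case_bv:
  assumes cx: "continuous_on {0..1} x"
    and hA: "\<forall>p q. 0 \<le> p \<longrightarrow> p \<le> q \<longrightarrow> q \<le> 1 \<longrightarrow> \<bar>A q - A p\<bar> \<le> w q - w p"
  shows "cauchyRS A x"
  unfolding cauchyRS_def
proof (intro allI impI)
  fix \<epsilon> :: real assume "\<epsilon> > 0"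
  define V where "V = w 1 - w 0"
  have V0: "0 \<le> V" using hA[rule_format, of 0 1] unfolding V_def by simp
  define e where "e = \<epsilon> / (V + 1)"
  have e0: "e > 0" unfolding e_def using V0 \<open>\<epsilon>>0\<close> by simp
  have eV: "e * V \<le> \<epsilon>"
  proof -
    have "e * V \<le> e * (V + 1)" using e0 by simp
    also have "\<dots> = \<epsilon>" unfolding e_def using V0 by simp
    finally show ?thesis .
  qed
  obtain d where d: "d > 0" and hd: "\<forall>a b. 0 \<le> a \<longrightarrow> a \<le> 1 \<longrightarrow> 0 \<le> b \<longrightarrow> b \<le> 1 \<longrightarrow> \<bar>a - b\<bar> \<le> d \<longrightarrow> \<bar>x a - x b\<bar> \<le> e"
    using unif_osc[OF cx] e0 by blast
  have hf: "\<forall>a b. 0 \<le> a \<longrightarrow> a \<le> 1 \<longrightarrow> 0 \<le> b \<longrightarrow> b \<le> 1 \<longrightarrow> \<bar>a - b\<bar> \<le> 2*(2*(d/4)) \<longrightarrow> \<bar>x a - x b\<bar> \<le> e"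
    using hd by simp
  show "\<exists>\<delta>>0. \<forall>n t \<xi> m u \<eta>. spart n t \<xi> \<delta> \<longrightarrow> spart m u \<eta> \<delta> \<longrightarrow> \<bar>RS A x n t \<xi> - RS A x m u \<eta>\<bar> \<le> \<epsilon>"
  proof (intro exI conjI allI impI)
    show "d/4 > 0" using d by simp
    fix n t \<xi> m u \<eta> assume P: "spart n t \<xi> (d/4)" and Q: "spart m u \<eta> (d/4)"
    obtain s where s: "wpart (Suc n) s" "\<forall>k<Suc n. s k \<le> t k \<and> t k \<le> s (Suc k)" "\<forall>k<Suc n. s (Suc k) - s k \<le> 2*(d/4)"
      "RS A x n t \<xi> = A 1 * x 1 - A 0 * x 0 - RS x A (Suc n) s t"
      using byparts[OF P, of A x] by blast
    obtain r where r: "wpart (Suc m) r" "\<forall>k<Suc m. r k \<le> u k \<and> u k \<le> r (Suc k)" "\<forall>k<Suc m. r (Suc k) - r k \<le> 2*(d/4)"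
      "RS A x m u \<eta> = A 1 * x 1 - A 0 * x 0 - RS x A (Suc m) r u"
      using byparts[OF Q, of A x] by blast
    have "\<bar>RS x A (Suc n) s t - RS x A (Suc m) r u\<bar> \<le> e * V"
      unfolding V_def by (rule core[OF s(1) r(1) s(2) r(2) s(3) r(3) hf hA])
    thus "\<bar>RS A x n t \<xi> - RS A x m u \<eta>\<bar> \<le> \<epsilon>" using eV s(4) r(4) by linarith
  qed
qed



lemma case_omega:
  assumes hx: "\<forall>p q. 0 \<le> p \<longrightarrow> p \<le> q \<longrightarrow> q \<le> 1 \<longrightarrow> \<bar>x q - x p\<bar> \<le> v q - v p"
    and cx: "continuous_on {0..1} x"
    and AO: "A \<in> Omega"
  shows "cauchyRS A x"
  unfolding cauchyRS_def
proof (intro allI impI)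
  fix \<epsilon> :: real assume "\<epsilon> > 0"
  define V where "V = v 1 - v 0"
  have V0: "0 \<le> V" using hx[rule_format, of 0 1] unfolding V_def by simp
  define e where "e = \<epsilon> / (2 * (V + 1))"
  have e0: "e > 0" unfolding e_def using V0 \<open>\<epsilon>>0\<close> by simp
  have eV: "e * V \<le> \<epsilon> / 2"
  proof -
    have "e * V \<le> e * (V + 1)" using e0 by simp
    also have "\<dots> = \<epsilon> / 2" unfolding e_def using V0 by (simp add: field_simps)
    finally show ?thesis .
  qed
  obtain a where a: "0 < a" "a < 1" "Omega_eps e 0 a A" "bounded_variation_on a 1 A"
  proof -
    have "\<forall>\<epsilon>>0. \<exists>a. 0 < a \<and> a < 1 \<and> Omega_eps \<epsilon> 0 a A \<and> bounded_variation_on a 1 A"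
      using AO unfolding Omega_def by simp
    then obtain a where "0 < a \<and> a < 1 \<and> Omega_eps e 0 a A \<and> bounded_variation_on a 1 A" using e0 by blast
    thus ?thesis using that by blast
  qed
  obtain d0 where d0: "d0 > 0" and hd0: "\<forall>t s. t \<in> {0..a} \<longrightarrow> s \<in> {0..a} \<longrightarrow> 0 \<le> s - t \<longrightarrow> s - t \<le> d0 \<longrightarrow>
        (\<forall>\<tau> \<sigma>. t \<le> \<tau> \<longrightarrow> \<tau> \<le> \<sigma> \<longrightarrow> \<sigma> \<le> s \<longrightarrow> \<bar>A \<sigma> - A \<tau>\<bar> \<le> e)"
    using a(3) unfolding Omega_eps_def by (elim conjE exE) blast
  define A1 where "A1 s = A (min s a)" for s
  define A2 where "A2 s = A (max a s) - A a" for s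
  have Asum: "A = (\<lambda>s. A1 s + A2 s)"
  proof
    fix s show "A s = A1 s + A2 s" unfolding A1_def A2_def by (cases "s \<le> a") (auto simp: min_def max_def)
  qed
  have wA: "\<forall>p q. a \<le> p \<longrightarrow> p \<le> q \<longrightarrow> q \<le> 1 \<longrightarrow> \<bar>A q - A p\<bar> \<le> variation_on a q A - variation_on a p A"
    by (rule bv_majorant[OF a(4)])
  have hA2: "\<forall>p q. 0 \<le> p \<longrightarrow> p \<le> q \<longrightarrow> q \<le> 1 \<longrightarrow> \<bar>A2 q - A2 p\<bar> \<le> variation_on a (max a q) A - variation_on a (max a p) A"
  proof (intro allI impI)
    fix p q :: real assume "0 \<le> p" "p \<le> q" "q \<le> 1"
    hence "a \<le> max a p" "max a p \<le> max a q" "max a q \<le> 1" using a by auto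
    hence "\<bar>A (max a q) - A (max a p)\<bar> \<le> variation_on a (max a q) A - variation_on a (max a p) A" using wA by blast
    thus "\<bar>A2 q - A2 p\<bar> \<le> variation_on a (max a q) A - variation_on a (max a p) A" unfolding A2_def by simp
  qed
  have C2: "cauchyRS A2 x" by (rule case_bv[OF cx hA2])
  have "\<epsilon>/2 > 0" using \<open>\<epsilon>>0\<close> by simp
  then obtain d2 where d2: "d2 > 0" and H2: "\<forall>n t \<xi> m u \<eta>. spart n t \<xi> d2 \<longrightarrow> spart m u \<eta> d2 \<longrightarrow>
      \<bar>RS A2 x n t \<xi> - RS A2 x m u \<eta>\<bar> \<le> \<epsilon>/2"
    using C2[unfolded cauchyRS_def, rule_format, OF \<open>\<epsilon>/2>0\<close>] by blast
  have hf1: "\<forall>p q. 0 \<le> p \<longrightarrow> p \<le> 1 \<longrightarrow> 0 \<le> q \<longrightarrow> q \<le> 1 \<longrightarrow> \<bar>p - q\<bar> \<le> 2*(d0/2) \<longrightarrow> \<bar>A1 p - A1 q\<bar> \<le> e"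
  proof (intro allI impI)
    fix p q :: real assume h: "0 \<le> p" "p \<le> 1" "0 \<le> q" "q \<le> 1" "\<bar>p - q\<bar> \<le> 2*(d0/2)"
    define p' where "p' = min p a"
    define q' where "q' = min q a"
    have r: "p' \<in> {0..a}" "q' \<in> {0..a}" "\<bar>p' - q'\<bar> \<le> d0"
      using h a(1) unfolding p'_def q'_def by (auto simp: min_def)
    have key: "\<bar>A v2 - A v1\<bar> \<le> e" if "v1 \<in> {0..a}" "v2 \<in> {0..a}" "v1 \<le> v2" "v2 - v1 \<le> d0" for v1 v2
    proof -
      have "\<forall>\<tau> \<sigma>. v1 \<le> \<tau> \<longrightarrow> \<tau> \<le> \<sigma> \<longrightarrow> \<sigma> \<le> v2 \<longrightarrow> \<bar>A \<sigma> - A \<tau>\<bar> \<le> e"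
        using hd0[rule_format, OF that(1) that(2)] that(3,4) by simp
      thus ?thesis using that(3) by simp
    qed
    have "\<bar>A p' - A q'\<bar> \<le> e"
    proof (cases "p' \<le> q'")
      case True
      hence "\<bar>A q' - A p'\<bar> \<le> e" using key[of p' q'] r by simp
      thus ?thesis by (simp add: abs_minus_commute)
    next
      case False
      thus ?thesis using key[of q' p'] r by simp
    qed
    thus "\<bar>A1 p - A1 q\<bar> \<le> e" unfolding A1_def p'_def q'_def .
  qed
  show "\<exists>\<delta>>0. \<forall>n t \<xi> m u \<eta>. spart n t \<xi> \<delta> \<longrightarrow> spart m u \<eta> \<delta> \<longrightarrow> \<bar>RS A x n t \<xi> - RS A x m u \<eta>\<bar> \<le> \<epsilon>"
  proof (intro exI conjI allI impI)
    show "min (d0/2) d2 > 0" using d0 d2 by simp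
    fix n t \<xi> m u \<eta> assume P: "spart n t \<xi> (min (d0/2) d2)" and Q: "spart m u \<eta> (min (d0/2) d2)"
    have P1: "spart n t \<xi> (d0/2)" "spart n t \<xi> d2" using spart_mono[OF P] by auto
    have Q1: "spart m u \<eta> (d0/2)" "spart m u \<eta> d2" using spart_mono[OF Q] by auto
    have "\<bar>RS A1 x n t \<xi> - RS A1 x m u \<eta>\<bar> \<le> e * V" unfolding V_def by (rule osc_pair[OF hx hf1 P1(1) Q1(1)])
    moreover have "\<bar>RS A2 x n t \<xi> - RS A2 x m u \<eta>\<bar> \<le> \<epsilon>/2" using H2 P1(2) Q1(2) by blast
    moreover have "RS A x n t \<xi> - RS A x m u \<eta> = (RS A1 x n t \<xi> - RS A1 x m u \<eta>) + (RS A2 x n t \<xi> - RS A2 x m u \<eta>)"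
      by (subst (1 2) Asum) (simp add: RS_add)
    ultimately show "\<bar>RS A x n t \<xi> - RS A x m u \<eta>\<bar> \<le> \<epsilon>" using eV by linarith
  qed
qed

lemma exist_int:
  assumes A: "A \<in> Omega_hat" and x: "x \<in> CBV"
  shows "\<exists>I. has_RS_integral A x I"
proof -
  have cx: "continuous_on {0..1} x" and bx: "bounded_variation_on 0 1 x" using x unfolding CBV_def by auto
  have hx: "\<forall>p q. 0 \<le> p \<longrightarrow> p \<le> q \<longrightarrow> q \<le> 1 \<longrightarrow> \<bar>x q - x p\<bar> \<le> variation_on 0 q x - variation_on 0 p x"
    by (rule bv_majorant[OF bx])
  have "cauchyRS A x"
  proof -
    consider "A \<in> Omega" | "continuous_on {0..1} A" | "bounded_variation_on 0 1 A" using A unfolding Omega_hat_def by blast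
    thus ?thesis
    proof cases
      case 1 show ?thesis by (rule case_omega[OF hx cx 1])
    next
      case 2 show ?thesis by (rule case_cont[OF hx 2])
    next
      case 3 show ?thesis by (rule case_bv[OF cx bv_majorant[OF 3]])
    qed
  qed
  thus ?thesis by (rule cauchy_conv)
qed

lemma bounded_A:
  assumes A: "A \<in> Omega_hat"
  shows "\<exists>M\<ge>0. \<forall>s\<in>{0..1}. \<bar>A s\<bar> \<le> M"
proof -
  consider "A \<in> Omega" | "continuous_on {0..1} A" | "bounded_variation_on 0 1 A" using A unfolding Omega_hat_def by blast
  thus ?thesis
  proof cases
    case 1
    then obtain M where "\<forall>u\<in>{0..1}. \<bar>A u\<bar> \<le> M" unfolding Omega_def bounded_on_def by blast
    thus ?thesis by (intro exI[of _ "max M 0"]) auto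
  next
    case 2
    have "bounded (A ` {0..1})" by (rule compact_imp_bounded[OF compact_continuous_image[OF 2 compact_Icc]])
    then obtain M where "\<forall>y\<in>A ` {0..1}. norm y \<le> M" unfolding bounded_iff by blast
    thus ?thesis by (intro exI[of _ "max M 0"]) auto
  next
    case 3
    have h: "\<forall>p q. 0 \<le> p \<longrightarrow> p \<le> q \<longrightarrow> q \<le> 1 \<longrightarrow> \<bar>A q - A p\<bar> \<le> variation_on 0 q A - variation_on 0 p A"
      by (rule bv_majorant[OF 3])
    show ?thesis
    proof (intro exI conjI ballI)
      show "0 \<le> \<bar>A 0\<bar> + (variation_on 0 1 A - variation_on 0 0 A)" using h[rule_format, of 0 1] by simp
      fix s :: real assume "s \<in> {0..1}"
      hence "\<bar>A s - A 0\<bar> \<le> variation_on 0 s A - variation_on 0 0 A" "\<bar>A 1 - A s\<bar> \<le> variation_on 0 1 A - variation_on 0 s A"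
        using h by auto
      thus "\<bar>A s\<bar> \<le> \<bar>A 0\<bar> + (variation_on 0 1 A - variation_on 0 0 A)" by linarith
    qed
  qed
qed

lemma RS_unique:
  assumes "has_RS_integral A x Ia" "has_RS_integral A x Kb"
  shows "Ia = Kb"
proof (rule ccontr)
  assume "Ia \<noteq> Kb"
  hence e: "\<bar>Ia - Kb\<bar> / 2 > 0" by simp
  obtain d1 where "d1 > 0" and H1: "\<forall>n t \<xi>. spart n t \<xi> d1 \<longrightarrow> \<bar>RS A x n t \<xi> - Ia\<bar> < \<bar>Ia - Kb\<bar> / 2"
    using assms(1)[unfolded has_RS_alt, rule_format, OF e] by blast
  obtain d2 where "d2 > 0" and H2: "\<forall>n t \<xi>. spart n t \<xi> d2 \<longrightarrow> \<bar>RS A x n t \<xi> - Kb\<bar> < \<bar>Ia - Kb\<bar> / 2"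
    using assms(2)[unfolded has_RS_alt, rule_format, OF e] by blast
  have "min d1 d2 > 0" using \<open>d1>0\<close> \<open>d2>0\<close> by simp
  then obtain n t \<xi> where P: "spart n t \<xi> (min d1 d2)" using exists_spart by blast
  have "\<bar>RS A x n t \<xi> - Ia\<bar> < \<bar>Ia - Kb\<bar> / 2" "\<bar>RS A x n t \<xi> - Kb\<bar> < \<bar>Ia - Kb\<bar> / 2"
    using H1 H2 spart_mono[OF P] by auto
  moreover have "\<bar>Ia - Kb\<bar> \<le> \<bar>RS A x n t \<xi> - Ia\<bar> + \<bar>RS A x n t \<xi> - Kb\<bar>"
    using abs_triangle_ineq4[of "RS A x n t \<xi> - Kb" "RS A x n t \<xi> - Ia"] by simp
  moreover have gen: "\<And>a b c::real. a < c/2 \<Longrightarrow> b < c/2 \<Longrightarrow> c \<le> a + b \<Longrightarrow> False" by linarith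
  ultimately show False by blast
qed

lemma RS_lin:
  assumes "has_RS_integral A x Ia" "has_RS_integral A y Kb"
  shows "has_RS_integral A (\<lambda>s. c * x s + a * y s) (c * Ia + a * Kb)"
  unfolding has_RS_alt
proof (intro allI impI)
  fix \<epsilon> :: real assume "\<epsilon> > 0"
  define L where "L = \<bar>c\<bar> + \<bar>a\<bar> + 1"
  have L0: "L > 0" unfolding L_def by simp
  have e: "\<epsilon> / L > 0" using L0 \<open>\<epsilon>>0\<close> by simp
  obtain d1 where "d1 > 0" and H1: "\<forall>n t \<xi>. spart n t \<xi> d1 \<longrightarrow> \<bar>RS A x n t \<xi> - Ia\<bar> < \<epsilon> / L"
    using assms(1)[unfolded has_RS_alt, rule_format, OF e] by blast
  obtain d2 where "d2 > 0" and H2: "\<forall>n t \<xi>. spart n t \<xi> d2 \<longrightarrow> \<bar>RS A y n t \<xi> - Kb\<bar> < \<epsilon> / L"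
    using assms(2)[unfolded has_RS_alt, rule_format, OF e] by blast
  show "\<exists>\<delta>>0. \<forall>n t \<xi>. spart n t \<xi> \<delta> \<longrightarrow> \<bar>RS A (\<lambda>s. c * x s + a * y s) n t \<xi> - (c * Ia + a * Kb)\<bar> < \<epsilon>"
  proof (intro exI conjI allI impI)
    show "min d1 d2 > 0" using \<open>d1>0\<close> \<open>d2>0\<close> by simp
    fix n t \<xi> assume P: "spart n t \<xi> (min d1 d2)"
    have b1: "\<bar>RS A x n t \<xi> - Ia\<bar> < \<epsilon> / L" and b2: "\<bar>RS A y n t \<xi> - Kb\<bar> < \<epsilon> / L"
      using H1 H2 spart_mono[OF P] by auto
    have "RS A (\<lambda>s. c * x s + a * y s) n t \<xi> = c * RS A x n t \<xi> + a * RS A y n t \<xi>"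
      unfolding RS_def sum_distrib_left sum.distrib[symmetric] by (rule sum.cong) (simp_all add: algebra_simps)
    hence eq: "RS A (\<lambda>s. c * x s + a * y s) n t \<xi> - (c * Ia + a * Kb) = c * (RS A x n t \<xi> - Ia) + a * (RS A y n t \<xi> - Kb)"
      by (simp add: algebra_simps)
    have "\<bar>c * (RS A x n t \<xi> - Ia)\<bar> \<le> \<bar>c\<bar> * (\<epsilon> / L)" unfolding abs_mult using b1 by (intro mult_left_mono) auto
    moreover have "\<bar>a * (RS A y n t \<xi> - Kb)\<bar> \<le> \<bar>a\<bar> * (\<epsilon> / L)" unfolding abs_mult using b2 by (intro mult_left_mono) auto
    moreover have "(\<bar>c\<bar> + \<bar>a\<bar>) * (\<epsilon> / L) < L * (\<epsilon> / L)" using e unfolding L_def by (intro mult_strict_right_mono) auto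
    moreover have "L * (\<epsilon> / L) = \<epsilon>" using L0 by simp
    moreover have "\<bar>c * (RS A x n t \<xi> - Ia) + a * (RS A y n t \<xi> - Kb)\<bar> \<le> \<bar>c * (RS A x n t \<xi> - Ia)\<bar> + \<bar>a * (RS A y n t \<xi> - Kb)\<bar>"
      by (rule abs_triangle_ineq)
    moreover have "(\<bar>c\<bar> + \<bar>a\<bar>) * (\<epsilon> / L) = \<bar>c\<bar> * (\<epsilon> / L) + \<bar>a\<bar> * (\<epsilon> / L)" by (rule distrib_right)
    ultimately show "\<bar>RS A (\<lambda>s. c * x s + a * y s) n t \<xi> - (c * Ia + a * Kb)\<bar> < \<epsilon>"
      unfolding eq by linarith
  qed
qed

lemma RS_bound:
  assumes Ia: "has_RS_integral A z Ia" and M: "\<forall>s\<in>{0..1}. \<bar>A s\<bar> \<le> M" and bz: "bdd_above (VS 0 1 z)"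
  shows "\<bar>Ia\<bar> \<le> M * variation_on 0 1 z"
proof (rule ccontr)
  assume "\<not> ?thesis"
  hence e: "\<bar>Ia\<bar> - M * variation_on 0 1 z > 0" by simp
  obtain d where "d > 0" and H: "\<forall>n t \<xi>. spart n t \<xi> d \<longrightarrow> \<bar>RS A z n t \<xi> - Ia\<bar> < \<bar>Ia\<bar> - M * variation_on 0 1 z"
    using Ia[unfolded has_RS_alt, rule_format, OF e] by blast
  obtain n t \<xi> where P: "spart n t \<xi> d" using exists_spart \<open>d>0\<close> by blast
  have "\<bar>RS A z n t \<xi>\<bar> \<le> (\<Sum>i<n. \<bar>A (\<xi> i) * (z (t (Suc i)) - z (t i))\<bar>)" unfolding RS_def by (rule sum_abs)
  also have "\<dots> \<le> (\<Sum>i<n. M * \<bar>z (t (Suc i)) - z (t i)\<bar>)"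
  proof (rule sum_mono)
    fix i assume "i \<in> {..<n}"
    hence "\<bar>A (\<xi> i)\<bar> \<le> M" using M spart_range[OF P] by auto
    thus "\<bar>A (\<xi> i) * (z (t (Suc i)) - z (t i))\<bar> \<le> M * \<bar>z (t (Suc i)) - z (t i)\<bar>"
      unfolding abs_mult by (intro mult_right_mono) auto
  qed
  also have "\<dots> = M * (\<Sum>i<n. \<bar>z (t (Suc i)) - z (t i)\<bar>)" by (simp add: sum_distrib_left)
  also have "\<dots> \<le> M * variation_on 0 1 z"
  proof -
    have "(\<Sum>i<n. \<bar>z (t (Suc i)) - z (t i)\<bar>) \<in> VS 0 1 z" using P unfolding spart_def VS_def by blast
    hence "(\<Sum>i<n. \<bar>z (t (Suc i)) - z (t i)\<bar>) \<le> variation_on 0 1 z" unfolding variation_VS using cSup_upper bz by blast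
    moreover have "0 \<le> M" using M by force
    ultimately show ?thesis by (intro mult_left_mono)
  qed
  finally have "\<bar>RS A z n t \<xi>\<bar> \<le> M * variation_on 0 1 z" .
  moreover have "\<bar>RS A z n t \<xi> - Ia\<bar> < \<bar>Ia\<bar> - M * variation_on 0 1 z" using H P by blast
  moreover have "\<bar>Ia\<bar> \<le> \<bar>RS A z n t \<xi>\<bar> + \<bar>RS A z n t \<xi> - Ia\<bar>"
    using abs_triangle_ineq4[of "RS A z n t \<xi>" "RS A z n t \<xi> - Ia"] by simp
  moreover have gen: "\<And>p q k m::real. p \<le> m \<Longrightarrow> q < k - m \<Longrightarrow> k \<le> p + q \<Longrightarrow> False" by linarith
  ultimately show False by blast
qed

lemma VS_diff_bdd:
  assumes "bdd_above (VS 0 1 x)" "bdd_above (VS 0 1 y)"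
  shows "bdd_above (VS 0 1 (\<lambda>s. y s - x s))"
proof -
  obtain Bx where Bx: "\<forall>r\<in>VS 0 1 x. r \<le> Bx" using assms(1) unfolding bdd_above_def by blast
  obtain By where By: "\<forall>r\<in>VS 0 1 y. r \<le> By" using assms(2) unfolding bdd_above_def by blast
  have "\<forall>r\<in>VS 0 1 (\<lambda>s. y s - x s). r \<le> By + Bx"
  proof
    fix r assume "r \<in> VS 0 1 (\<lambda>s. y s - x s)"
    then obtain n t where nt: "is_partition 0 1 n t" "r = (\<Sum>i<n. \<bar>(y (t (Suc i)) - x (t (Suc i))) - (y (t i) - x (t i))\<bar>)"
      unfolding VS_def by blast
    have "r \<le> (\<Sum>i<n. \<bar>y (t (Suc i)) - y (t i)\<bar> + \<bar>x (t (Suc i)) - x (t i)\<bar>)"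
      unfolding nt(2) by (intro sum_mono) linarith
    also have "\<dots> = (\<Sum>i<n. \<bar>y (t (Suc i)) - y (t i)\<bar>) + (\<Sum>i<n. \<bar>x (t (Suc i)) - x (t i)\<bar>)" by (rule sum.distrib)
    also have "\<dots> \<le> By + Bx"
    proof -
      have "(\<Sum>i<n. \<bar>y (t (Suc i)) - y (t i)\<bar>) \<in> VS 0 1 y" "(\<Sum>i<n. \<bar>x (t (Suc i)) - x (t i)\<bar>) \<in> VS 0 1 x"
        using nt(1) unfolding VS_def by blast+
      thus ?thesis using Bx By by (meson add_mono)
    qed
    finally show "r \<le> By + Bx" .
  qed
  thus ?thesis unfolding bdd_above_def by blast
qed

theorem corollary4p13:
  fixes A :: "real \<Rightarrow> real"
  assumes "A \<in> Omega_hat"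
  shows "\<exists>J :: (real \<Rightarrow> real) \<Rightarrow> real.
           (\<forall>x\<in>CBV. has_RS_integral A x (J x)) \<and>
           (\<forall>x\<in>CBV. \<forall>y\<in>CBV. \<forall>c a :: real. J (\<lambda>s. c * x s + a * y s) = c * J x + a * J y) \<and>
           (\<forall>x\<in>CBV. \<forall>\<epsilon>>0. \<exists>\<delta>>0. \<forall>y\<in>CBV.
              BV_norm (\<lambda>s. y s - x s) < \<delta> \<longrightarrow> \<bar>J y - J x\<bar> < \<epsilon>)"
proof -
  define J where "J x = (THE I. has_RS_integral A x I)" for x
  have Jeq: "J x = I" if "has_RS_integral A x I" for x I
    unfolding J_def using that RS_unique by blast
  have JI: "has_RS_integral A x (J x)" if xC: "x \<in> CBV" for x
  proof -
    obtain I where "has_RS_integral A x I" using exist_int[OF assms xC] by blast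
    moreover have "J x = I" using Jeq calculation by blast
    ultimately show ?thesis by simp
  qed
  obtain M where M0: "M \<ge> 0" and M: "\<forall>s\<in>{0..1}. \<bar>A s\<bar> \<le> M" using bounded_A[OF assms] by blast
  have lin: "J (\<lambda>s. c * x s + a * y s) = c * J x + a * J y" if "x \<in> CBV" "y \<in> CBV" for x y c a
    by (rule Jeq[OF RS_lin[OF JI[OF that(1)] JI[OF that(2)]]])
  have cont: "\<exists>\<delta>>0. \<forall>y\<in>CBV. BV_norm (\<lambda>s. y s - x s) < \<delta> \<longrightarrow> \<bar>J y - J x\<bar> < \<epsilon>" if x: "x \<in> CBV" and "\<epsilon> > 0" for x \<epsilon>
  proof (intro exI conjI ballI impI)
    show "\<epsilon> / (M + 1) > 0" using \<open>\<epsilon>>0\<close> M0 by simp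
    fix y assume y: "y \<in> CBV" and nrm: "BV_norm (\<lambda>s. y s - x s) < \<epsilon> / (M + 1)"
    have "has_RS_integral A (\<lambda>s. 1 * y s + (-1) * x s) (1 * J y + (-1) * J x)"
      by (rule RS_lin[OF JI[OF y] JI[OF x]])
    hence hz: "has_RS_integral A (\<lambda>s. y s - x s) (J y - J x)" by simp
    have bz: "bdd_above (VS 0 1 (\<lambda>s. y s - x s))"
    proof (rule VS_diff_bdd)
      show "bdd_above (VS 0 1 x)" using x unfolding CBV_def bounded_variation_on_def VS_def by simp
      show "bdd_above (VS 0 1 y)" using y unfolding CBV_def bounded_variation_on_def VS_def by simp
    qed
    have "\<bar>J y - J x\<bar> \<le> M * variation_on 0 1 (\<lambda>s. y s - x s)" by (rule RS_bound[OF hz M bz])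
    also have "\<dots> \<le> M * BV_norm (\<lambda>s. y s - x s)" unfolding BV_norm_def using M0 by (intro mult_left_mono) auto
    also have "\<dots> \<le> M * (\<epsilon> / (M + 1))" using nrm M0 by (intro mult_left_mono) auto
    also have "\<dots> < (M + 1) * (\<epsilon> / (M + 1))" using \<open>\<epsilon>>0\<close> M0 by (intro mult_strict_right_mono) auto
    also have "\<dots> = \<epsilon>" using M0 by simp
    finally show "\<bar>J y - J x\<bar> < \<epsilon>" .
  qed
  have 1: "\<forall>x\<in>CBV. has_RS_integral A x (J x)" using JI by blast
  have 2: "\<forall>x\<in>CBV. \<forall>y\<in>CBV. \<forall>c a :: real. J (\<lambda>s. c * x s + a * y s) = c * J x + a * J y" using lin by blast
  have 3: "\<forall>x\<in>CBV. \<forall>\<epsilon>>0. \<exists>\<delta>>0. \<forall>y\<in>CBV. BV_norm (\<lambda>s. y s - x s) < \<delta> \<longrightarrow> \<bar>J y - J x\<bar> < \<epsilon>"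
    using cont by blast
  show ?thesis by (intro exI[of _ J] conjI 1 2 3)
qed


end
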